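(* Let $n\ge2$, $k\ge1$, and let $L_1,\dots,L_n$ be commuting indeterminates over $\mathbb{K}=\mathbb{C}(q)$. Let $G_{n,k}=\sum_{i=1}^n L_i^k\prod_{j\ne i}\frac{qL_i-q^{-1}L_j}{L_i-L_j}$. For $1\le i\le\min(k,n)$ let $\Gamma_{k,i}=s_{(k-i+1,1^{i-1})}(L_1,\dots,L_n)$ be the Schur polynomial of the hook partition $(k-i+1,1^{i-1})$, i.e. the character of the irreducible $\mathfrak{gl}_n$-module of highest weight $(k-i+1)\epsilon_1+\epsilon_2+\cdots+\epsilon_i$ with $e^{\epsilon_j}$ replaced by $L_j$; set $\Gamma_{k,i}=0$ if $i>k$. Then $G_{n,k}=\sum_{i=1}^n(-1)^{i-1}q^{n-2i+1}\Gamma_{k,i}$.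
   Context: In the paper $L_i=q^{n-2i+1}K_i^2$ are elements of the commutative subalgebra of $\mathrm{U}_q(\mathfrak{gl}_n)$ generated by the $K_i^{\pm1}$, in which they are algebraically independent. *)

theory Defs
  imports Main
begin

text \<open>Young diagram of a partition given as a list of (weakly decreasing) row lengths;
  cells are (row, column) pairs, 0-indexed.\<close>
definition young_cells :: "nat list \<Rightarrow> (nat \<times> nat) set" where
  "young_cells lam = {(r, c). r < length lam \<and> c < lam ! r}"

definition ssyt :: "nat \<Rightarrow> nat list \<Rightarrow> ((nat \<times> nat) \<Rightarrow> nat) set" where
  "ssyt n lam = {T.
     (\<forall>x\<in>young_cells lam. T x < n) \<and>
     (\<forall>x. x \<notin> young_cells lam \<longrightarrow> T x = 0) \<and>
     (\<forall>r c. (r, Suc c) \<in> young_cells lam \<longrightarrow> T (r, c) \<le> T (r, Suc c)) \<and>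
     (\<forall>r c. (Suc r, c) \<in> young_cells lam \<longrightarrow> T (r, c) < T (Suc r, c))}"

definition schur :: "nat \<Rightarrow> nat list \<Rightarrow> (nat \<Rightarrow> 'a::comm_ring_1) \<Rightarrow> 'a" where
  "schur n lam L = (\<Sum>T\<in>ssyt n lam. \<Prod>x\<in>young_cells lam. L (T x))"

definition hook :: "nat \<Rightarrow> nat \<Rightarrow> nat list" where
  "hook a b = a # replicate b 1"

definition Gamma :: "nat \<Rightarrow> nat \<Rightarrow> nat \<Rightarrow> (nat \<Rightarrow> 'a::comm_ring_1) \<Rightarrow> 'a" where
  "Gamma n k i L = (if i > k then 0 else schur n (hook (k - i + 1) (i - 1)) L)"

definition Gnk :: "nat \<Rightarrow> nat \<Rightarrow> 'a::field \<Rightarrow> (nat \<Rightarrow> 'a) \<Rightarrow> 'a" where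
  "Gnk n k q L = (\<Sum>i<n. L i ^ k *
      (\<Prod>j\<in>{..<n} - {i}. (q * L i - inverse q * L j) / (L i - L j)))"

end

theory Submission
  imports Defs
begin

definition Wk :: "nat \<Rightarrow> nat \<Rightarrow> nat \<Rightarrow> nat list set" where
  "Wk n c m = {xs. length xs = m \<and> sorted xs \<and> set xs \<subseteq> {c..<n}}"
definition St :: "nat \<Rightarrow> nat \<Rightarrow> nat \<Rightarrow> nat list set" where
  "St n c m = {xs. length xs = m \<and> sorted_wrt (<) xs \<and> set xs \<subseteq> {c..<n}}"
definition HH :: "nat \<Rightarrow> (nat \<Rightarrow> 'a::comm_ring_1) \<Rightarrow> nat \<Rightarrow> nat \<Rightarrow> 'a" where
  "HH n L c m = (\<Sum>xs\<in>Wk n c m. prod_list (map L xs))"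
definition EE :: "nat \<Rightarrow> (nat \<Rightarrow> 'a::comm_ring_1) \<Rightarrow> nat \<Rightarrow> nat \<Rightarrow> 'a" where
  "EE n L c m = (\<Sum>xs\<in>St n c m. prod_list (map L xs))"
definition SS :: "nat \<Rightarrow> (nat \<Rightarrow> 'a::comm_ring_1) \<Rightarrow> nat \<Rightarrow> nat \<Rightarrow> nat \<Rightarrow> 'a" where
  "SS n L c a b = (\<Sum>j\<in>{c..<n}. L j * HH n L j (a - 1) * EE n L (Suc j) b)"

lemma finite_Wk: "finite (Wk n c m)"
proof -
  have "Wk n c m \<subseteq> {xs. set xs \<subseteq> {c..<n} \<and> length xs = m}" by (auto simp: Wk_def)
  thus ?thesis using finite_lists_length_eq[of "{c..<n}" m] finite_subset by blast
qed
lemma finite_St: "finite (St n c m)"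
proof -
  have "St n c m \<subseteq> {xs. set xs \<subseteq> {c..<n} \<and> length xs = m}" by (auto simp: St_def)
  thus ?thesis using finite_lists_length_eq[of "{c..<n}" m] finite_subset by blast
qed

lemma HH_0[simp]: "HH n L c 0 = 1"
proof -
  have "Wk n c 0 = {[]}" by (auto simp: Wk_def)
  thus ?thesis by (simp add: HH_def)
qed
lemma EE_0[simp]: "EE n L c 0 = 1"
proof -
  have "St n c 0 = {[]}" by (auto simp: St_def)
  thus ?thesis by (simp add: EE_def)
qed
lemma HH_empty: "n \<le> c \<Longrightarrow> HH n L c (Suc m) = 0"
proof -
  assume "n \<le> c"
  hence "Wk n c (Suc m) = {}" by (auto simp: Wk_def length_Suc_conv)
  thus ?thesis by (simp add: HH_def)
qed
lemma EE_empty: "n \<le> c \<Longrightarrow> EE n L c (Suc m) = 0"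
proof -
  assume "n \<le> c"
  hence "St n c (Suc m) = {}" by (auto simp: St_def length_Suc_conv)
  thus ?thesis by (simp add: EE_def)
qed

lemma Wk_Suc: "c < n \<Longrightarrow> Wk n c (Suc m) = (Cons c) ` Wk n c m \<union> Wk n (Suc c) (Suc m)"
proof (intro equalityI subsetI)
  fix xs assume c: "c < n" and xs: "xs \<in> Wk n c (Suc m)"
  then obtain y ys where e: "xs = y # ys" by (cases xs) (auto simp: Wk_def)
  show "xs \<in> (Cons c) ` Wk n c m \<union> Wk n (Suc c) (Suc m)"
  proof (cases "y = c")
    case True thus ?thesis using xs e by (auto simp: Wk_def)
  next
    case False
    hence "y > c" using xs e by (auto simp: Wk_def)
    hence "set xs \<subseteq> {Suc c..<n}" using xs e by (force simp: Wk_def)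
    thus ?thesis using xs by (auto simp: Wk_def)
  qed
next
  fix xs assume c: "c < n" and xs: "xs \<in> (Cons c) ` Wk n c m \<union> Wk n (Suc c) (Suc m)"
  thus "xs \<in> Wk n c (Suc m)" by (force simp: Wk_def)
qed

lemma HH_Suc: "c < n \<Longrightarrow> HH n L c (Suc m) = L c * HH n L c m + HH n L (Suc c) (Suc m)"
proof -
  assume c: "c < n"
  have d: "(Cons c) ` Wk n c m \<inter> Wk n (Suc c) (Suc m) = {}" by (auto simp: Wk_def)
  have "HH n L c (Suc m) = (\<Sum>xs\<in>(Cons c) ` Wk n c m. prod_list (map L xs)) + HH n L (Suc c) (Suc m)"
    unfolding HH_def Wk_Suc[OF c] by (rule sum.union_disjoint) (use d finite_Wk in auto)
  also have "(\<Sum>xs\<in>(Cons c) ` Wk n c m. prod_list (map L xs)) = L c * HH n L c m"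
    by (subst sum.reindex) (auto simp: HH_def sum_distrib_left)
  finally show ?thesis .
qed

lemma St_Suc: "c < n \<Longrightarrow> St n c (Suc m) = (Cons c) ` St n (Suc c) m \<union> St n (Suc c) (Suc m)"
proof (intro equalityI subsetI)
  fix xs assume c: "c < n" and xs: "xs \<in> St n c (Suc m)"
  then obtain y ys where e: "xs = y # ys" by (cases xs) (auto simp: St_def)
  show "xs \<in> (Cons c) ` St n (Suc c) m \<union> St n (Suc c) (Suc m)"
  proof (cases "y = c")
    case True
    hence "set ys \<subseteq> {Suc c..<n}" using xs e by (force simp: St_def)
    thus ?thesis using True xs e by (auto simp: St_def)
  next
    case False
    hence "y > c" using xs e by (auto simp: St_def)
    hence "set xs \<subseteq> {Suc c..<n}" using xs e by (force simp: St_def)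
    thus ?thesis using xs by (auto simp: St_def)
  qed
next
  fix xs assume c: "c < n" and xs: "xs \<in> (Cons c) ` St n (Suc c) m \<union> St n (Suc c) (Suc m)"
  thus "xs \<in> St n c (Suc m)" by (force simp: St_def)
qed

lemma EE_Suc: "c < n \<Longrightarrow> EE n L c (Suc m) = L c * EE n L (Suc c) m + EE n L (Suc c) (Suc m)"
proof -
  assume c: "c < n"
  have d: "(Cons c) ` St n (Suc c) m \<inter> St n (Suc c) (Suc m) = {}" by (auto simp: St_def)
  have "EE n L c (Suc m) = (\<Sum>xs\<in>(Cons c) ` St n (Suc c) m. prod_list (map L xs)) + EE n L (Suc c) (Suc m)"
    unfolding EE_def St_Suc[OF c] by (rule sum.union_disjoint) (use d finite_St in auto)
  also have "(\<Sum>xs\<in>(Cons c) ` St n (Suc c) m. prod_list (map L xs)) = L c * EE n L (Suc c) m"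
    by (subst sum.reindex) (auto simp: EE_def sum_distrib_left)
  finally show ?thesis .
qed


lemma SS_Suc: "lo < n \<Longrightarrow> SS n L lo a b = L lo * HH n L lo (a - 1) * EE n L (Suc lo) b + SS n L (Suc lo) a b"
  unfolding SS_def by (simp add: sum.atLeast_Suc_lessThan)
lemma SS_empty: "n \<le> lo \<Longrightarrow> SS n L lo a b = 0"
  unfolding SS_def by simp

lemma hook_id:
  "lo \<le> n \<Longrightarrow> EE n L lo (Suc b) * HH n L lo a' =
     SS n L lo (Suc a') b + (if 1 \<le> a' then SS n L lo a' (Suc b) else 0)"
proof (induction "n - lo" arbitrary: lo)
  case 0
  hence "n \<le> lo" by simp
  thus ?case by (simp add: EE_empty SS_empty)
next
  case (Suc d)
  hence lo: "lo < n" by simp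
  have IH: "EE n L (Suc lo) (Suc b) * HH n L (Suc lo) a' =
     SS n L (Suc lo) (Suc a') b + (if 1 \<le> a' then SS n L (Suc lo) a' (Suc b) else 0)"
    using Suc by simp
  have E: "EE n L lo (Suc b) = L lo * EE n L (Suc lo) b + EE n L (Suc lo) (Suc b)"
    using EE_Suc[OF lo] .
  show ?case
  proof (cases a')
    case 0
    thus ?thesis using IH E SS_Suc[OF lo, of L "Suc 0" b] by simp
  next
    case (Suc a'')
    have H: "HH n L lo a' = L lo * HH n L lo a'' + HH n L (Suc lo) a'"
      using HH_Suc[OF lo] Suc by simp
    show ?thesis using IH E H SS_Suc[OF lo, of L "Suc a'" b] SS_Suc[OF lo, of L "a'" "Suc b"] Suc
      by (simp add: algebra_simps)
  qed
qed

lemma SS_0: "lo \<le> n \<Longrightarrow> SS n L lo (Suc a) 0 = HH n L lo (Suc a)"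
proof (induction "n - lo" arbitrary: lo)
  case 0
  hence "n \<le> lo" by simp
  thus ?case by (simp add: HH_empty SS_empty)
next
  case (Suc d)
  hence lo: "lo < n" by simp
  have IH: "SS n L (Suc lo) (Suc a) 0 = HH n L (Suc lo) (Suc a)" using Suc by simp
  show ?case using SS_Suc[OF lo, of L "Suc a" 0] IH HH_Suc[OF lo, of L a] by simp
qed

definition hz :: "nat \<Rightarrow> (nat \<Rightarrow> 'a::comm_ring_1) \<Rightarrow> int \<Rightarrow> 'a" where
  "hz n L d = (if d < 0 then 0 else HH n L 0 (nat d))"

lemma alt_sum:
  assumes k: "k \<ge> 1"
  shows "(\<Sum>d\<le>b. (-1) ^ d * EE n L 0 d * hz n L (int k - int d)) =
    (if b < k then (-1) ^ b * SS n L 0 (k - b) b else 0)"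
proof (induction b)
  case 0
  obtain k' where "k = Suc k'" using k by (cases k) auto
  moreover have "nat (int k) = k" by simp
  ultimately show ?case using SS_0[of 0 n L k'] by (simp only: hz_def) simp
next
  case (Suc b)
  have s: "(\<Sum>d\<le>Suc b. (-1) ^ d * EE n L 0 d * hz n L (int k - int d)) =
     (if b < k then (-1) ^ b * SS n L 0 (k - b) b else 0) +
     (-1) ^ Suc b * EE n L 0 (Suc b) * hz n L (int k - int (Suc b))"
    using Suc by simp
  show ?case
  proof (cases "Suc b < k")
    case True
    have h: "hz n L (int k - int (Suc b)) = HH n L 0 (k - b - 1)"
    proof -
      have e: "int k - int (Suc b) = int (k - b - 1)" using True by simp
      show ?thesis by (simp only: hz_def e) simp
    qed
    have "EE n L 0 (Suc b) * HH n L 0 (k - b - 1) = SS n L 0 (Suc (k - b - 1)) b + SS n L 0 (k - b - 1) (Suc b)"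
      using hook_id[of 0 n L b "k - b - 1"] True
      by (simp add: le_diff_conv2 del: diff_diff_left)
    moreover have "Suc (k - b - 1) = k - b" using True by simp
    ultimately show ?thesis using s h True by (simp add: algebra_simps)
  next
    case False
    show ?thesis
    proof (cases "Suc b = k")
      case True
      have h: "hz n L (int k - int (Suc b)) = 1" using True by (simp add: hz_def)
      have "EE n L 0 (Suc b) = SS n L 0 (Suc 0) b"
        using hook_id[of 0 n L b 0] by simp
      moreover have "k - b = Suc 0" using True by simp
      ultimately show ?thesis using s h True[symmetric] by simp
    next
      case False
      hence "hz n L (int k - int (Suc b)) = 0" "\<not> b < k" using \<open>\<not> Suc b < k\<close> by (auto simp: hz_def)
      thus ?thesis using s \<open>\<not> Suc b < k\<close> by simp
    qed
  qed
qed


definition FF :: "(nat \<Rightarrow> 'a::field) \<Rightarrow> nat set \<Rightarrow> nat \<Rightarrow> 'a" where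
  "FF L S m = (\<Sum>i\<in>S. L i ^ m / (\<Prod>j\<in>S - {i}. (L i - L j)))"

lemma gen: "x / ((u - a') * ((u - b') * P)) * (a' - b') = x / ((u - a') * P) - x / ((u - b') * P)"
        if "u - a' \<noteq> 0" "u - b' \<noteq> 0" "P \<noteq> 0" for x u a' b' P :: "'a::field"
proof -
  define D where "D = (u - a') * ((u - b') * P)"
  have e1: "x / ((u - a') * P) = x * (u - b') / D"
    using that by (simp add: D_def)
  have e2: "x / ((u - b') * P) = x * (u - a') / D"
    using that by (simp add: D_def)
  have e3: "x * (u - b') - x * (u - a') = x * (a' - b')" by (simp add: algebra_simps)
  have "x * (u - b') / D - x * (u - a') / D = x * (a' - b') / D"
    by (simp only: diff_divide_distrib[symmetric] e3)
  thus ?thesis unfolding e1 e2 D_def[symmetric] by simp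
qed

lemma FF_insert:
  assumes "finite S" "a \<notin> S"
  shows "FF L (insert a S) m = L a ^ m / (\<Prod>j\<in>S. (L a - L j)) +
     (\<Sum>i\<in>S. L i ^ m / ((L i - L a) * (\<Prod>j\<in>S - {i}. (L i - L j))))"
proof -
  have "FF L (insert a S) m = L a ^ m / (\<Prod>j\<in>insert a S - {a}. (L a - L j)) +
     (\<Sum>i\<in>S. L i ^ m / (\<Prod>j\<in>insert a S - {i}. (L i - L j)))"
    unfolding FF_def using assms by (simp add: sum.insert)
  also have "insert a S - {a} = S" using assms by auto
  also have "(\<Sum>i\<in>S. L i ^ m / (\<Prod>j\<in>insert a S - {i}. (L i - L j))) =
      (\<Sum>i\<in>S. L i ^ m / ((L i - L a) * (\<Prod>j\<in>S - {i}. (L i - L j))))"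
  proof (rule sum.cong[OF refl])
    fix i assume i: "i \<in> S"
    hence "insert a S - {i} = insert a (S - {i})" using assms by auto
    thus "L i ^ m / (\<Prod>j\<in>insert a S - {i}. (L i - L j)) =
      L i ^ m / ((L i - L a) * (\<Prod>j\<in>S - {i}. (L i - L j)))"
      using assms by (simp add: prod.insert)
  qed
  finally show ?thesis .
qed

lemma FF_rec:
  assumes "finite S" "a \<notin> S" "inj_on L (insert a S)"
  shows "FF L (insert a S) (Suc m) = L a * FF L (insert a S) m + FF L S m"
proof -
  have "(\<Sum>i\<in>S. L i ^ Suc m / ((L i - L a) * (\<Prod>j\<in>S - {i}. (L i - L j)))) =
     (\<Sum>i\<in>S. L a * (L i ^ m / ((L i - L a) * (\<Prod>j\<in>S - {i}. (L i - L j)))) +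
        L i ^ m / (\<Prod>j\<in>S - {i}. (L i - L j)))"
  proof (rule sum.cong[OF refl])
    fix i assume i: "i \<in> S"
    hence ne: "L i - L a \<noteq> 0" using assms by (auto simp: inj_on_def)
    show "L i ^ Suc m / ((L i - L a) * (\<Prod>j\<in>S - {i}. (L i - L j))) =
       L a * (L i ^ m / ((L i - L a) * (\<Prod>j\<in>S - {i}. (L i - L j)))) +
        L i ^ m / (\<Prod>j\<in>S - {i}. (L i - L j))"
    proof (cases "(\<Prod>j\<in>S - {i}. (L i - L j)) = 0")
      case True thus ?thesis by simp
    next
      case False
      with ne show ?thesis by (simp add: field_simps)
    qed
  qed
  moreover have "L a ^ Suc m / (\<Prod>j\<in>S. (L a - L j)) = L a * (L a ^ m / (\<Prod>j\<in>S. (L a - L j)))"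
    by simp
  ultimately show ?thesis
    unfolding FF_insert[OF assms(1,2)] by (simp add: FF_def sum.distrib sum_distrib_left algebra_simps)
qed

lemma FF_dd:
  assumes "finite S" "a \<notin> S" "b \<notin> S" "a \<noteq> b" "inj_on L (insert a (insert b S))"
  shows "FF L (insert a (insert b S)) m * (L a - L b) = FF L (insert a S) m - FF L (insert b S) m"
proof -
  have ab: "L a - L b \<noteq> 0" "L b - L a \<noteq> 0" using assms by (auto simp: inj_on_def)
  have fb: "finite (insert b S)" "a \<notin> insert b S" using assms by auto
  have t1: "L a ^ m / (\<Prod>j\<in>insert b S. (L a - L j)) * (L a - L b) = L a ^ m / (\<Prod>j\<in>S. (L a - L j))"
    using assms ab by (simp add: prod.insert)
  have t2: "L b ^ m / ((L b - L a) * (\<Prod>j\<in>insert b S - {b}. (L b - L j))) * (L a - L b)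
     = - (L b ^ m / (\<Prod>j\<in>S. (L b - L j)))"
  proof -
    have "insert b S - {b} = S" using assms by auto
    moreover have "x / ((u - v) * P) * (v - u) = - (x / P)" if "u - v \<noteq> 0" for x u v P :: 'a
    proof -
      have "x / ((u - v) * P) * (v - u) = x / ((u - v) * P) * (-(u - v))" by simp
      also have "\<dots> = - (x / P)" using that by (cases "P = 0") (simp_all add: field_simps)
      finally show ?thesis .
    qed
    ultimately show ?thesis using ab by simp
  qed
  have t3: "(\<Sum>i\<in>S. L i ^ m / ((L i - L a) * (\<Prod>j\<in>insert b S - {i}. (L i - L j)))) * (L a - L b)
     = (\<Sum>i\<in>S. L i ^ m / ((L i - L a) * (\<Prod>j\<in>S - {i}. (L i - L j)))) -
       (\<Sum>i\<in>S. L i ^ m / ((L i - L b) * (\<Prod>j\<in>S - {i}. (L i - L j))))"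
    unfolding sum_distrib_right sum_subtractf[symmetric]
  proof (rule sum.cong[OF refl])
    fix i assume i: "i \<in> S"
    hence ne: "L i - L a \<noteq> 0" "L i - L b \<noteq> 0" using assms by (auto simp: inj_on_def)
    have e: "insert b S - {i} = insert b (S - {i})" using assms i by auto
    show "L i ^ m / ((L i - L a) * (\<Prod>j\<in>insert b S - {i}. (L i - L j))) * (L a - L b) =
       L i ^ m / ((L i - L a) * (\<Prod>j\<in>S - {i}. (L i - L j))) -
       L i ^ m / ((L i - L b) * (\<Prod>j\<in>S - {i}. (L i - L j)))"
    proof -
      have gen: "x / ((u - a') * ((u - b') * P)) * (a' - b') = x / ((u - a') * P) - x / ((u - b') * P)"
        if "u - a' \<noteq> 0" "u - b' \<noteq> 0" for x u a' b' P :: 'a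
        using that gen[of u a' b' P x] by (cases "P = 0") simp_all
      have "(\<Prod>j\<in>insert b S - {i}. (L i - L j)) = (L i - L b) * (\<Prod>j\<in>S - {i}. (L i - L j))"
        unfolding e using assms by simp
      thus ?thesis using gen[OF ne] by simp
    qed
  qed
  have "FF L (insert a (insert b S)) m =
     L a ^ m / (\<Prod>j\<in>insert b S. (L a - L j)) +
     (L b ^ m / ((L b - L a) * (\<Prod>j\<in>insert b S - {b}. (L b - L j))) +
      (\<Sum>i\<in>S. L i ^ m / ((L i - L a) * (\<Prod>j\<in>insert b S - {i}. (L i - L j)))))"
    unfolding FF_insert[OF fb] using assms by (simp add: sum.insert)
  hence "FF L (insert a (insert b S)) m * (L a - L b) =
     L a ^ m / (\<Prod>j\<in>S. (L a - L j)) - L b ^ m / (\<Prod>j\<in>S. (L b - L j)) +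
      ((\<Sum>i\<in>S. L i ^ m / ((L i - L a) * (\<Prod>j\<in>S - {i}. (L i - L j)))) -
       (\<Sum>i\<in>S. L i ^ m / ((L i - L b) * (\<Prod>j\<in>S - {i}. (L i - L j)))))"
    using t1 t2 t3 by (simp add: distrib_right)
  thus ?thesis unfolding FF_insert[OF assms(1,2)] FF_insert[OF assms(1,3)] by simp
qed

lemma FF_small:
  "\<forall>S. finite S \<longrightarrow> inj_on L S \<longrightarrow> card S = Suc s \<longrightarrow> FF L S s = 1 \<and> (\<forall>m<s. FF L S m = 0)"
proof (induction s)
  case 0
  show ?case
  proof (intro allI impI)
    fix S assume "finite S" "inj_on L S" "card S = Suc 0"
    then obtain a where "S = {a}" by (metis One_nat_def card_1_singletonE)
    thus "FF L S 0 = 1 \<and> (\<forall>m<0. FF L S m = 0)" by (simp add: FF_def)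
  qed
next
  case (Suc s)
  show ?case
  proof (intro allI impI)
    fix S :: "nat set" assume fS: "finite S" and inj: "inj_on L S" and cS: "card S = Suc (Suc s)"
    then obtain a where a: "a \<in> S" by fastforce
    have cS1: "card (S - {a}) = Suc s" using cS a fS by simp
    hence "S - {a} \<noteq> {}" by (metis card.empty nat.distinct(1))
    then obtain b where b: "b \<in> S - {a}" by blast
    define T where "T = S - {a} - {b}"
    have fT: "finite T" and aT: "a \<notin> T" and bT: "b \<notin> T" and ab: "a \<noteq> b" using fS b by (auto simp: T_def)
    have SS: "S = insert a (insert b T)" using a b by (auto simp: T_def)
    have cT: "card T = s" using cS1 b fS by (simp add: T_def)
    have c1: "card (insert a T) = Suc s" "card (insert b T) = Suc s" using fT aT bT cT by auto
    have i1: "inj_on L (insert a T)" "inj_on L (insert b T)" using inj SS by (auto intro: inj_on_subset)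
    have IHa: "FF L (insert a T) s = 1" "\<forall>m<s. FF L (insert a T) m = 0"
      using Suc.IH fT c1 i1 by auto
    have IHb: "FF L (insert b T) s = 1" "\<forall>m<s. FF L (insert b T) m = 0"
      using Suc.IH fT c1 i1 by auto
    have Lab: "L a - L b \<noteq> 0" using inj a b by (auto simp: inj_on_def)
    have zero: "FF L S m = 0" if m: "m < Suc s" for m
    proof -
      have "FF L S m * (L a - L b) = FF L (insert a T) m - FF L (insert b T) m"
        unfolding SS using FF_dd[OF fT aT bT ab] inj SS by simp
      also have "\<dots> = 0" using m IHa IHb by (cases "m = s") auto
      finally show ?thesis using Lab by simp
    qed
    have "S = insert a (S - {a})" using a by auto
    hence "FF L S (Suc s) = L a * FF L S s + FF L (S - {a}) s"
      using FF_rec[of "S - {a}" a L s] fS inj by simp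
    also have "\<dots> = 1" using zero Suc.IH fS cS1 inj by (auto intro: inj_on_subset)
    finally show "FF L S (Suc s) = 1 \<and> (\<forall>m<Suc s. FF L S m = 0)" using zero by simp
  qed
qed

definition hzl :: "nat \<Rightarrow> (nat \<Rightarrow> 'a::comm_ring_1) \<Rightarrow> nat \<Rightarrow> int \<Rightarrow> 'a" where
  "hzl n L lo d = (if d < 0 then 0 else HH n L lo (nat d))"

lemma lagrange:
  fixes L :: "nat \<Rightarrow> 'a::field"
  assumes "lo \<le> n" "inj_on L {lo..<n}"
  shows "FF L {lo..<n} m = hzl n L lo (int m + 1 - int (n - lo))"
  using assms
proof (induction "n - lo" arbitrary: lo m)
  case 0
  hence "lo = n" by simp
  moreover have "nat (int m + 1) = Suc m" by simp
  ultimately show ?case by (simp add: FF_def hzl_def HH_empty)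
next
  case (Suc d)
  hence lo: "lo < n" by simp
  have e: "{lo..<n} = insert lo {Suc lo..<n}" using lo by auto
  have inj: "inj_on L (insert lo {Suc lo..<n})" using Suc.prems e by simp
  have IH: "FF L {Suc lo..<n} m' = hzl n L (Suc lo) (int m' + 1 - int (n - Suc lo))" for m'
  proof -
    have "inj_on L {Suc lo..<n}" by (rule inj_on_subset[OF Suc.prems(2)]) auto
    thus ?thesis using Suc.hyps(1)[of "Suc lo" m'] Suc.hyps(2) lo by simp
  qed
  show ?case
  proof (induction m)
    case 0
    have "FF L {lo..<n} 0 = (if n - lo = 1 then 1 else 0)"
      using FF_small[of L "n - lo - 1"] Suc.prems lo by auto
    thus ?case using lo by (cases "n - lo = Suc 0") (auto simp: hzl_def)
  next
    case (Suc m)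
    have "FF L {lo..<n} (Suc m) = L lo * FF L {lo..<n} m + FF L {Suc lo..<n} m"
      unfolding e using FF_rec[OF _ _ inj] by simp
    also have "\<dots> = L lo * hzl n L lo (int m + 1 - int (n - lo)) + hzl n L (Suc lo) (int m + 1 - int (n - Suc lo))"
      using Suc.IH IH by simp
    also have "\<dots> = hzl n L lo (int (Suc m) + 1 - int (n - lo))"
    proof -
      define t where "t = int m + 1 - int (n - lo)"
      have t2: "int m + 1 - int (n - Suc lo) = t + 1" using lo by (simp add: t_def)
      have t3: "int (Suc m) + 1 - int (n - lo) = t + 1" by (simp add: t_def)
      show ?thesis unfolding t2 t3 t_def[symmetric]
      proof (cases "t < 0")
        case True
        thus "L lo * hzl n L lo t + hzl n L (Suc lo) (t + 1) = hzl n L lo (t + 1)"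
          by (cases "t = -1") (auto simp: hzl_def)
      next
        case False
        then obtain u where u: "t = int u" by (metis nonneg_int_cases not_less)
        have e: "t + 1 = int (Suc u)" using u by simp
        show "L lo * hzl n L lo t + hzl n L (Suc lo) (t + 1) = hzl n L lo (t + 1)"
        proof -
          have h1: "hzl n L lo (int (Suc u)) = HH n L lo (Suc u)" unfolding hzl_def nat_int by simp
          have h2: "hzl n L (Suc lo) (int (Suc u)) = HH n L (Suc lo) (Suc u)" unfolding hzl_def nat_int by simp
          have h3: "hzl n L lo t = HH n L lo u" unfolding hzl_def u nat_int by simp
          show ?thesis unfolding e h1 h2 h3 using HH_Suc[OF lo, of L u] by simp
        qed
      qed
    qed
    finally show ?case .
  qed
qed


definition esym :: "(nat \<Rightarrow> 'a::comm_ring_1) \<Rightarrow> nat set \<Rightarrow> nat \<Rightarrow> 'a" where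
  "esym L S b = (\<Sum>T\<in>{T. T \<subseteq> S \<and> card T = b}. prod L T)"

lemma esym_0: "finite S \<Longrightarrow> esym L S 0 = 1"
proof -
  assume "finite S"
  hence "{T. T \<subseteq> S \<and> card T = 0} = {{}}" by (auto simp: card_eq_0_iff dest: finite_subset)
  thus ?thesis by (simp add: esym_def)
qed

lemma esym_empty: "esym L {} (Suc b) = 0"
proof -
  have e: "{T. T \<subseteq> {} \<and> card T = Suc b} = {}" by auto
  show ?thesis unfolding esym_def e by simp
qed

lemma esym_insert:
  assumes "finite S" "a \<notin> S"
  shows "esym L (insert a S) (Suc b) = esym L S (Suc b) + L a * esym L S b"
proof -
  have e: "{T. T \<subseteq> insert a S \<and> card T = Suc b} =
     {T. T \<subseteq> S \<and> card T = Suc b} \<union> insert a ` {T. T \<subseteq> S \<and> card T = b}"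
  proof (intro equalityI subsetI)
    fix T assume T: "T \<in> {T. T \<subseteq> insert a S \<and> card T = Suc b}"
    show "T \<in> {T. T \<subseteq> S \<and> card T = Suc b} \<union> insert a ` {T. T \<subseteq> S \<and> card T = b}"
    proof (cases "a \<in> T")
      case True
      have fT: "finite T" using T assms by (auto intro: finite_subset)
      have "T = insert a (T - {a})" using True by auto
      moreover have "T - {a} \<subseteq> S" "card (T - {a}) = b" using T True fT by auto
      ultimately show ?thesis by blast
    next
      case False thus ?thesis using T by auto
    qed
  next
    fix T assume "T \<in> {T. T \<subseteq> S \<and> card T = Suc b} \<union> insert a ` {T. T \<subseteq> S \<and> card T = b}"
    thus "T \<in> {T. T \<subseteq> insert a S \<and> card T = Suc b}"
    proof
      assume "T \<in> {T. T \<subseteq> S \<and> card T = Suc b}" thus ?thesis by auto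
    next
      assume "T \<in> insert a ` {T. T \<subseteq> S \<and> card T = b}"
      then obtain U where U: "U \<subseteq> S" "card U = b" "T = insert a U" by auto
      have "finite U" using U assms by (auto intro: finite_subset)
      moreover have "a \<notin> U" using U assms by auto
      ultimately show ?thesis using U assms by auto
    qed
  qed
  have fin: "finite {T. T \<subseteq> S \<and> card T = c}" for c using assms by simp
  have disj: "{T. T \<subseteq> S \<and> card T = Suc b} \<inter> insert a ` {T. T \<subseteq> S \<and> card T = b} = {}"
    using assms by auto
  have inj: "inj_on (insert a) {T. T \<subseteq> S \<and> card T = b}"
  proof (rule inj_onI)
    fix x y assume x: "x \<in> {T. T \<subseteq> S \<and> card T = b}" and y: "y \<in> {T. T \<subseteq> S \<and> card T = b}"
      and xy: "insert a x = insert a y"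
    have "a \<notin> x" "a \<notin> y" using x y assms by auto
    hence "x = insert a x - {a}" "y = insert a y - {a}" by auto
    thus "x = y" using xy by simp
  qed
  have "esym L (insert a S) (Suc b) = esym L S (Suc b) + (\<Sum>T\<in>insert a ` {T. T \<subseteq> S \<and> card T = b}. prod L T)"
    unfolding esym_def e by (rule sum.union_disjoint) (use fin disj in auto)
  also have "(\<Sum>T\<in>insert a ` {T. T \<subseteq> S \<and> card T = b}. prod L T) = L a * esym L S b"
    unfolding esym_def sum.reindex[OF inj] sum_distrib_left
  proof (rule sum.cong[OF refl])
    fix T assume "T \<in> {T. T \<subseteq> S \<and> card T = b}"
    moreover hence "finite T" using assms by (auto intro: finite_subset)
    moreover have "a \<notin> T" using calculation assms by auto
    ultimately show "(prod L \<circ> insert a) T = L a * prod L T" by simp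
  qed
  finally show ?thesis .
qed

lemma esym_EE: "lo \<le> n \<Longrightarrow> esym L {lo..<n} b = EE n L lo b"
proof (induction "n - lo" arbitrary: lo b)
  case 0
  hence "lo = n" by simp
  thus ?case by (cases b) (simp_all add: esym_0 esym_empty EE_empty)
next
  case (Suc d)
  hence lo: "lo < n" by simp
  have e: "{lo..<n} = insert lo {Suc lo..<n}" using lo by auto
  have IH: "esym L {Suc lo..<n} b' = EE n L (Suc lo) b'" for b' using Suc lo by simp
  show ?case
  proof (cases b)
    case 0 thus ?thesis by (simp add: esym_0)
  next
    case (Suc b')
    thus ?thesis unfolding e using esym_insert[of "{Suc lo..<n}" lo L b'] IH EE_Suc[OF lo, of L b'] by (simp add: add.commute)
  qed
qed

lemma prod_expand:
  assumes "finite U"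
  shows "(\<Prod>j\<in>U. y + z * L j) = (\<Sum>b\<le>card U. esym L U b * z ^ b * y ^ (card U - b))"
proof -
  have "(\<Prod>j\<in>U. y + z * L j) = (\<Prod>j\<in>U. z * L j + y)" by (simp add: add.commute)
  also have "\<dots> = (\<Sum>X\<in>Pow U. (\<Prod>j\<in>X. z * L j) * (\<Prod>j\<in>U - X. y))"
    by (rule prod_add[OF assms])
  also have "\<dots> = (\<Sum>X\<in>Pow U. prod L X * z ^ card X * y ^ (card U - card X))"
  proof (rule sum.cong[OF refl])
    fix X assume X: "X \<in> Pow U"
    hence "finite X" using assms by (auto intro: finite_subset)
    hence "card (U - X) = card U - card X" using X assms by (simp add: card_Diff_subset)
    thus "(\<Prod>j\<in>X. z * L j) * (\<Prod>j\<in>U - X. y) = prod L X * z ^ card X * y ^ (card U - card X)"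
      by (simp add: prod.distrib mult.commute)
  qed
  also have "\<dots> = (\<Sum>b\<le>card U. \<Sum>X\<in>{X. X \<in> Pow U \<and> card X = b}. prod L X * z ^ card X * y ^ (card U - card X))"
    by (rule sum.group[symmetric]) (use assms card_mono in auto)
  also have "\<dots> = (\<Sum>b\<le>card U. esym L U b * z ^ b * y ^ (card U - b))"
    unfolding esym_def sum_distrib_right by (rule sum.cong[OF refl], rule sum.cong) auto
  finally show ?thesis .
qed

lemma esym_del:
  assumes "finite S" "i \<in> S"
  shows "esym L (S - {i}) b = (\<Sum>c\<le>b. (- L i) ^ c * esym L S (b - c))"
proof (induction b)
  case 0 thus ?case using assms by (simp add: esym_0)
next
  case (Suc b)
  have e: "S = insert i (S - {i})" using assms by auto
  have "esym L S (Suc b) = esym L (S - {i}) (Suc b) + L i * esym L (S - {i}) b"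
    using esym_insert[of "S - {i}" i L b] assms e by simp
  hence "esym L (S - {i}) (Suc b) = esym L S (Suc b) - L i * (\<Sum>c\<le>b. (- L i) ^ c * esym L S (b - c))"
    using Suc by (simp add: algebra_simps)
  also have "\<dots> = (\<Sum>c\<le>Suc b. (- L i) ^ c * esym L S (Suc b - c))"
  proof -
    have "(\<Sum>c\<le>b. (- L i) ^ Suc c * esym L S (b - c)) = - (L i * (\<Sum>c\<le>b. (- L i) ^ c * esym L S (b - c)))"
      by (simp add: sum_distrib_left sum_negf[symmetric] mult.assoc)
    thus ?thesis unfolding sum.atMost_Suc_shift by simp
  qed
  finally show ?case .
qed


lemma mem_cells: "(r, c) \<in> young_cells (hook (Suc a') b) \<longleftrightarrow> (r = 0 \<and> c \<le> a') \<or> (0 < r \<and> r \<le> b \<and> c = 0)"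
  unfolding young_cells_def hook_def by (cases r) auto

lemma hook_cells: "young_cells (hook (Suc a') b) = (\<lambda>c. (0, c)) ` {..<Suc a'} \<union> (\<lambda>r. (Suc r, 0)) ` {..<b}"
proof (rule set_eqI)
  fix x :: "nat \<times> nat"
  obtain r c where x: "x = (r, c)" by fastforce
  show "x \<in> young_cells (hook (Suc a') b) \<longleftrightarrow> x \<in> (\<lambda>c. (0, c)) ` {..<Suc a'} \<union> (\<lambda>r. (Suc r, 0)) ` {..<b}"
    unfolding x mem_cells by (cases r) auto
qed

lemma prod_list_map_upt: "prod_list (map g [0..<m]) = (\<Prod>i<m. g i)"
  by (induction m) (auto simp: mult.commute)

definition tab :: "nat \<Rightarrow> nat \<Rightarrow> nat \<times> nat list \<times> nat list \<Rightarrow> (nat \<times> nat \<Rightarrow> nat)" where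
  "tab a' b p = (\<lambda>(r, c). if r = 0 \<and> c \<le> a' then (fst p # fst (snd p)) ! c
     else if 0 < r \<and> r \<le> b \<and> c = 0 then (fst p # snd (snd p)) ! r else 0)"

definition untab :: "nat \<Rightarrow> nat \<Rightarrow> (nat \<times> nat \<Rightarrow> nat) \<Rightarrow> nat \<times> nat list \<times> nat list" where
  "untab a' b T = (T (0, 0), map (\<lambda>c. T (0, Suc c)) [0..<a'], map (\<lambda>r. T (Suc r, 0)) [0..<b])"

lemma SS_sigma:
  "SS n L 0 (Suc a') b = (\<Sum>(j, xs, ys)\<in>(SIGMA j:{0..<n}. Wk n j a' \<times> St n (Suc j) b).
      L j * prod_list (map L xs) * prod_list (map L ys))"
proof -
  have "SS n L 0 (Suc a') b = (\<Sum>j\<in>{0..<n}. \<Sum>(xs, ys)\<in>Wk n j a' \<times> St n (Suc j) b.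
      L j * prod_list (map L xs) * prod_list (map L ys))"
    unfolding SS_def
  proof (rule sum.cong[OF refl])
    fix j
    show "L j * HH n L j (Suc a' - 1) * EE n L (Suc j) b = (\<Sum>(xs, ys)\<in>Wk n j a' \<times> St n (Suc j) b.
      L j * prod_list (map L xs) * prod_list (map L ys))"
    proof -
      have e1: "(\<Sum>xs\<in>Wk n j a'. \<Sum>ys\<in>St n (Suc j) b. L j * prod_list (map L xs) * prod_list (map L ys))
          = (\<Sum>xs\<in>Wk n j a'. L j * prod_list (map L xs) * (\<Sum>ys\<in>St n (Suc j) b. prod_list (map L ys)))"
        by (simp add: sum_distrib_left)
      also have "\<dots> = (\<Sum>xs\<in>Wk n j a'. L j * prod_list (map L xs)) * (\<Sum>ys\<in>St n (Suc j) b. prod_list (map L ys))"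
        by (simp add: sum_distrib_right)
      also have "\<dots> = L j * HH n L j (Suc a' - 1) * EE n L (Suc j) b"
        by (simp add: HH_def EE_def sum_distrib_left)
      finally show ?thesis unfolding sum.cartesian_product by simp
    qed
  qed
  also have "\<dots> = (\<Sum>(j, xs, ys)\<in>(SIGMA j:{0..<n}. Wk n j a' \<times> St n (Suc j) b).
      L j * prod_list (map L xs) * prod_list (map L ys))"
    by (rule sum.Sigma) (auto simp: finite_Wk finite_St)
  finally show ?thesis .
qed

lemma schur_hook_Suc: "schur n (hook (Suc a') b) L = SS n L 0 (Suc a') b"
proof -
  define C where "C = young_cells (hook (Suc a') b)"
  define Tr where "Tr = (SIGMA j:{0..<n}. Wk n j a' \<times> St n (Suc j) b)"
  have memC: "(r, c) \<in> C \<longleftrightarrow> (r = 0 \<and> c \<le> a') \<or> (0 < r \<and> r \<le> b \<and> c = 0)" for r c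
    unfolding C_def by (rule mem_cells)
  have "schur n (hook (Suc a') b) L = (\<Sum>T\<in>ssyt n (hook (Suc a') b). \<Prod>x\<in>C. L (T x))"
    unfolding schur_def C_def ..
  also have "\<dots> = (\<Sum>(j, xs, ys)\<in>Tr. L j * prod_list (map L xs) * prod_list (map L ys))"
  proof (rule sum.reindex_bij_witness[where i = "tab a' b" and j = "untab a' b"])
    fix T assume T: "T \<in> ssyt n (hook (Suc a') b)"
    have Tlt: "T x < n" if "x \<in> C" for x using T that by (auto simp: ssyt_def C_def)
    have T0: "T x = 0" if "x \<notin> C" for x using T that by (cases x) (auto simp: ssyt_def C_def)
    have Trow: "T (0, c) \<le> T (0, Suc c)" if "c < a'" for c
      using T that memC[of 0 "Suc c"] by (auto simp: ssyt_def C_def)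
    have Tcol: "T (r, 0) < T (Suc r, 0)" if "r < b" for r
      using T that memC[of "Suc r" 0] by (auto simp: ssyt_def C_def)
    define R where "R = map (\<lambda>c. T (0, c)) [0..<Suc a']"
    define K where "K = map (\<lambda>r. T (r, 0)) [0..<Suc b]"
    have R: "R = T (0, 0) # map (\<lambda>c. T (0, Suc c)) [0..<a']" unfolding R_def by (rule map_upt_Suc)
    have K: "K = T (0, 0) # map (\<lambda>r. T (Suc r, 0)) [0..<b]" unfolding K_def by (rule map_upt_Suc)
    have sR: "sorted R" unfolding R_def sorted_iff_nth_Suc
    proof (intro allI impI)
      fix i assume "Suc i < length (map (\<lambda>c. T (0, c)) [0..<Suc a'])"
      hence "i < a'" by simp
      thus "map (\<lambda>c. T (0, c)) [0..<Suc a'] ! i \<le> map (\<lambda>c. T (0, c)) [0..<Suc a'] ! Suc i"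
        using Trow by (simp del: upt_Suc)
    qed
    have sK: "sorted_wrt (<) K" unfolding K_def sorted_wrt_iff_nth_Suc_transp[OF transp_on_less]
      using Tcol by (auto simp del: upt_Suc)
    show "untab a' b T \<in> Tr"
    proof -
      have j: "T (0, 0) < n" using Tlt memC by auto
      have xs: "map (\<lambda>c. T (0, Suc c)) [0..<a'] \<in> Wk n (T (0, 0)) a'"
        using sR Tlt memC unfolding R Wk_def by auto
      have ys: "map (\<lambda>r. T (Suc r, 0)) [0..<b] \<in> St n (Suc (T (0, 0))) b"
        using sK Tlt memC unfolding K St_def by (auto simp: Suc_le_eq)
      show ?thesis unfolding untab_def Tr_def using j xs ys by auto
    qed
    show "tab a' b (untab a' b T) = T"
    proof (rule ext, clarify)
      fix r c
      show "tab a' b (untab a' b T) (r, c) = T (r, c)"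
      proof (cases "r = 0 \<and> c \<le> a'")
        case True
        thus ?thesis unfolding tab_def untab_def by (cases c) (auto simp: nth_Cons')
      next
        case False
        show ?thesis
        proof (cases "0 < r \<and> r \<le> b \<and> c = 0")
          case True
          then obtain r' where "r = Suc r'" by (cases r) auto
          thus ?thesis using True unfolding tab_def untab_def by auto
        next
          case F2: False
          hence "(r, c) \<notin> C" using False memC by blast
          thus ?thesis using T0 False F2 unfolding tab_def untab_def by auto
        qed
      qed
    qed
    show "(case untab a' b T of (j, xs, ys) \<Rightarrow> L j * prod_list (map L xs) * prod_list (map L ys)) =
        (\<Prod>x\<in>C. L (T x))"
    proof -
      have C: "C = (\<lambda>c. (0, c)) ` {..<Suc a'} \<union> (\<lambda>r. (Suc r, 0)) ` {..<b}"
        unfolding C_def by (rule hook_cells)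
      have "(\<Prod>x\<in>C. L (T x)) = (\<Prod>x\<in>(\<lambda>c. (0, c)) ` {..<Suc a'}. L (T x)) * (\<Prod>x\<in>(\<lambda>r. (Suc r, 0)) ` {..<b}. L (T x))"
        unfolding C by (rule prod.union_disjoint) auto
      also have "\<dots> = (\<Prod>c<Suc a'. L (T (0, c))) * (\<Prod>r<b. L (T (Suc r, 0)))"
        by (subst prod.reindex, simp add: inj_on_def)+ simp
      also have "\<dots> = L (T (0, 0)) * (\<Prod>c<a'. L (T (0, Suc c))) * (\<Prod>r<b. L (T (Suc r, 0)))"
        by (simp only: prod.lessThan_Suc_shift mult.assoc)
      finally show ?thesis unfolding untab_def by (simp add: prod_list_map_upt o_def)
    qed
  next
    fix p assume p: "p \<in> Tr"
    then obtain j xs ys where pe: "p = (j, xs, ys)" and j: "j < n" and xs: "xs \<in> Wk n j a'"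
      and ys: "ys \<in> St n (Suc j) b" unfolding Tr_def by auto
    have lx: "length xs = a'" and sx: "sorted xs" and setx: "set xs \<subseteq> {j..<n}" using xs by (auto simp: Wk_def)
    have ly: "length ys = b" and sy: "sorted_wrt (<) ys" and sety: "set ys \<subseteq> {Suc j..<n}" using ys by (auto simp: St_def)
    have sjx: "sorted (j # xs)" using sx setx by auto
    have sjy: "sorted_wrt (<) (j # ys)" using sy sety by (auto simp: Suc_le_eq)
    have ltx: "\<forall>v\<in>set (j # xs). v < n" using j setx by auto
    have lty: "\<forall>v\<in>set (j # ys). v < n" using j sety by auto
    show "untab a' b (tab a' b p) = p"
    proof -
      have "map (\<lambda>c. tab a' b p (0, Suc c)) [0..<a'] = xs"
        by (rule nth_equalityI) (auto simp: lx tab_def pe)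
      moreover have "map (\<lambda>r. tab a' b p (Suc r, 0)) [0..<b] = ys"
        by (rule nth_equalityI) (auto simp: ly tab_def pe)
      ultimately show ?thesis unfolding untab_def by (simp add: tab_def pe)
    qed
    show "tab a' b p \<in> ssyt n (hook (Suc a') b)"
      unfolding ssyt_def
    proof (intro CollectI conjI allI impI ballI)
      fix x assume "x \<in> young_cells (hook (Suc a') b)"
      then obtain r c where x: "x = (r, c)" "(r, c) \<in> C" unfolding C_def by (cases x) auto
      show "tab a' b p x < n"
      proof (cases "r = 0 \<and> c \<le> a'")
        case True
        hence "c < length (j # xs)" using lx by simp
        hence "(j # xs) ! c \<in> set (j # xs)" by (rule nth_mem)
        hence "(j # xs) ! c < n" using ltx by blast
        thus ?thesis using True unfolding x tab_def pe by simp
      next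
        case False
        hence "0 < r \<and> r \<le> b \<and> c = 0" using x memC by blast
        hence rr: "0 < r \<and> r \<le> b \<and> c = 0" "r < length (j # ys)" using ly by simp_all
        hence "(j # ys) ! r \<in> set (j # ys)" by (intro nth_mem)
        hence "(j # ys) ! r < n" using lty by blast
        thus ?thesis using False rr unfolding x tab_def pe by simp
      qed
    next
      fix x assume "x \<notin> young_cells (hook (Suc a') b)"
      then obtain r c where x: "x = (r, c)" "(r, c) \<notin> C" unfolding C_def by (cases x) auto
      thus "tab a' b p x = 0" using memC[of r c] unfolding tab_def by auto
    next
      fix r c assume "(r, Suc c) \<in> young_cells (hook (Suc a') b)"
      hence rc: "r = 0" "Suc c \<le> a'" using memC[of r "Suc c"] unfolding C_def by auto
      show "tab a' b p (r, c) \<le> tab a' b p (r, Suc c)"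
        using sorted_nth_mono[OF sjx, of c "Suc c"] rc lx unfolding tab_def pe by auto
    next
      fix r c assume "(Suc r, c) \<in> young_cells (hook (Suc a') b)"
      hence rc: "c = 0" "Suc r \<le> b" using memC[of "Suc r" c] unfolding C_def by auto
      have "(j # ys) ! r < (j # ys) ! Suc r"
        using sorted_wrt_nth_less[OF sjy, of r "Suc r"] rc ly by simp
      moreover have "tab a' b p (r, 0) = (j # ys) ! r"
        using rc unfolding tab_def pe by (cases r) auto
      ultimately show "tab a' b p (r, c) < tab a' b p (Suc r, c)"
        using rc unfolding tab_def pe by auto
    qed
  qed
  also have "\<dots> = SS n L 0 (Suc a') b" unfolding Tr_def SS_sigma ..
  finally show ?thesis .
qed

lemma schur_hook: "1 \<le> a \<Longrightarrow> schur n (hook a b) L = SS n L 0 a b"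
  using schur_hook_Suc[of n "a - 1" b L] by simp



lemma G_term:
  fixes q :: "'a::field" and L :: "nat \<Rightarrow> 'a"
  assumes i: "i < n"
  shows "L i ^ k * (\<Prod>j\<in>{..<n}-{i}. (q * L i - inverse q * L j) / (L i - L j)) =
   (\<Sum>b\<le>n-1. \<Sum>c\<le>b. ((- inverse q) ^ b * q ^ (n - 1 - b) * (-1) ^ c * esym L {..<n} (b - c)) *
        (L i ^ (k + (n - 1 - b) + c) / (\<Prod>j\<in>{..<n}-{i}. (L i - L j))))"
proof -
  define U where "U = {..<n} - {i}"
  define D where "D = (\<Prod>j\<in>U. (L i - L j))"
  have fU: "finite U" and cU: "card U = n - 1" using i by (auto simp: U_def)
  have "(\<Prod>j\<in>U. (q * L i - inverse q * L j) / (L i - L j)) = (\<Prod>j\<in>U. q * L i + (- inverse q) * L j) / D"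
    unfolding D_def prod_dividef by simp
  also have "(\<Prod>j\<in>U. q * L i + (- inverse q) * L j) =
      (\<Sum>b\<le>n-1. esym L U b * (- inverse q) ^ b * (q * L i) ^ (n - 1 - b))"
    using prod_expand[OF fU, of "q * L i" "- inverse q" L] cU by simp
  also have "\<dots> = (\<Sum>b\<le>n-1. (\<Sum>c\<le>b. (- L i) ^ c * esym L {..<n} (b - c)) * (- inverse q) ^ b * (q * L i) ^ (n - 1 - b))"
    unfolding U_def using esym_del[of "{..<n}" i L] i by simp
  finally have "L i ^ k * (\<Prod>j\<in>U. (q * L i - inverse q * L j) / (L i - L j)) =
     (\<Sum>b\<le>n-1. \<Sum>c\<le>b. L i ^ k * ((- L i) ^ c * esym L {..<n} (b - c) * (- inverse q) ^ b * (q * L i) ^ (n - 1 - b)) / D)"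
    by (simp add: sum_distrib_left sum_distrib_right sum_divide_distrib)
  also have "\<dots> = (\<Sum>b\<le>n-1. \<Sum>c\<le>b. ((- inverse q) ^ b * q ^ (n - 1 - b) * (-1) ^ c * esym L {..<n} (b - c)) *
        (L i ^ (k + (n - 1 - b) + c) / D))"
    by (intro sum.cong refl) (simp add: power_add power_mult_distrib power_minus[of "L i"] mult_ac)
  finally show ?thesis unfolding U_def D_def .
qed

lemma neg1_pow_diff: "d \<le> b \<Longrightarrow> (-1::'a::comm_ring_1) ^ (b - d) = (-1) ^ b * (-1) ^ d"
proof -
  assume "d \<le> b"
  hence "(-1::'a) ^ b = (-1) ^ (b - d) * (-1) ^ d" by (simp add: power_add[symmetric])
  moreover have "(-1::'a) ^ d * (-1) ^ d = 1" by (simp add: power_add[symmetric])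
  ultimately show ?thesis by (simp add: mult.assoc)
qed

theorem corollary3p4:
  fixes q :: "'a::field_char_0" and L :: "nat \<Rightarrow> 'a" and n k :: nat
  assumes "n \<ge> 2" and "k \<ge> 1" and "q \<noteq> 0" and "inj_on L {..<n}"
  shows "Gnk n k q L =
    (\<Sum>i=1..n. (-1) ^ (i - 1) * q powi (int n - 2 * int i + 1) * Gamma n k i L)"
proof -
  note n = assms(1) and k = assms(2) and q = assms(3) and inj = assms(4)
  define C where "C b c = (- inverse q) ^ b * q ^ (n - 1 - b) * (-1) ^ c * esym L {..<n} (b - c)" for b c
  have "Gnk n k q L = (\<Sum>i<n. \<Sum>b\<le>n-1. \<Sum>c\<le>b. C b c *
        (L i ^ (k + (n - 1 - b) + c) / (\<Prod>j\<in>{..<n}-{i}. (L i - L j))))"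
    unfolding Gnk_def C_def by (rule sum.cong[OF refl]) (rule G_term, simp)
  also have "\<dots> = (\<Sum>b\<le>n-1. \<Sum>c\<le>b. C b c * FF L {..<n} (k + (n - 1 - b) + c))"
    unfolding FF_def sum_distrib_left
    by (subst sum.swap) (rule sum.cong[OF refl], subst sum.swap, rule refl)
  also have "\<dots> = (\<Sum>b\<le>n-1. \<Sum>c\<le>b. C b c * hz n L (int k - int (b - c)))"
  proof (intro sum.cong refl)
    fix b c assume b: "b \<in> {..n-1}" and c: "c \<in> {..b}"
    have "FF L {..<n} (k + (n - 1 - b) + c) = hzl n L 0 (int (k + (n - 1 - b) + c) + 1 - int (n - 0))"
      using lagrange[of 0 n L "k + (n - 1 - b) + c"] inj by (simp add: atLeast0LessThan)
    also have "int (k + (n - 1 - b) + c) + 1 - int (n - 0) = int k - int (b - c)"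
      using b c n by auto
    finally show "C b c * FF L {..<n} (k + (n - 1 - b) + c) = C b c * hz n L (int k - int (b - c))"
      by (simp add: hz_def hzl_def)
  qed
  also have "\<dots> = (\<Sum>b\<le>n-1. (-1) ^ b * (inverse q ^ b * q ^ (n - 1 - b)) *
      (if b < k then SS n L 0 (k - b) b else 0))"
  proof (rule sum.cong[OF refl])
    fix b assume b: "b \<in> {..n-1}"
    have "(\<Sum>c\<le>b. (-1) ^ c * EE n L 0 (b - c) * hz n L (int k - int (b - c))) =
          (\<Sum>d\<le>b. (-1) ^ (b - d) * EE n L 0 d * hz n L (int k - int d))"
    proof -
      have "(\<Sum>c\<le>b. (-1) ^ c * EE n L 0 (b - c) * hz n L (int k - int (b - c))) =
            (\<Sum>c<Suc b. (-1) ^ (b - (b - c)) * EE n L 0 (b - c) * hz n L (int k - int (b - c)))"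
        by (intro sum.cong) auto
      also have "\<dots> = (\<Sum>c<Suc b. (-1) ^ (b - (Suc b - Suc c)) * EE n L 0 (Suc b - Suc c) * hz n L (int k - int (Suc b - Suc c)))"
        by simp
      also have "\<dots> = (\<Sum>d<Suc b. (-1) ^ (b - d) * EE n L 0 d * hz n L (int k - int d))"
        by (rule sum.nat_diff_reindex[where g = "\<lambda>d. (-1) ^ (b - d) * EE n L 0 d * hz n L (int k - int d)"])
      finally show ?thesis by (simp add: lessThan_Suc_atMost)
    qed
    also have "\<dots> = (-1) ^ b * (\<Sum>d\<le>b. (-1) ^ d * EE n L 0 d * hz n L (int k - int d))"
      unfolding sum_distrib_left by (intro sum.cong refl) (simp add: neg1_pow_diff mult.assoc)
    also have "\<dots> = (-1) ^ b * (if b < k then (-1) ^ b * SS n L 0 (k - b) b else 0)"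
      using alt_sum[OF k, of n L b] by simp
    also have "\<dots> = (if b < k then SS n L 0 (k - b) b else 0)"
      by (simp add: power_add[symmetric])
    finally have inner: "(\<Sum>c\<le>b. (-1) ^ c * EE n L 0 (b - c) * hz n L (int k - int (b - c))) =
        (if b < k then SS n L 0 (k - b) b else 0)" .
    have "(\<Sum>c\<le>b. C b c * hz n L (int k - int (b - c))) =
        (- inverse q) ^ b * q ^ (n - 1 - b) * (\<Sum>c\<le>b. (-1) ^ c * EE n L 0 (b - c) * hz n L (int k - int (b - c)))"
      unfolding C_def sum_distrib_left using esym_EE[of 0 n L] by (intro sum.cong refl) (simp add: atLeast0LessThan mult_ac)
    also have "\<dots> = (-1) ^ b * (inverse q ^ b * q ^ (n - 1 - b)) * (if b < k then SS n L 0 (k - b) b else 0)"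
      unfolding inner by (simp add: power_minus[of "inverse q"])
    finally show "(\<Sum>c\<le>b. C b c * hz n L (int k - int (b - c))) =
       (-1) ^ b * (inverse q ^ b * q ^ (n - 1 - b)) * (if b < k then SS n L 0 (k - b) b else 0)" .
  qed
  also have "\<dots> = (\<Sum>b\<le>n-1. (-1) ^ (Suc b - 1) * q powi (int n - 2 * int (Suc b) + 1) * Gamma n k (Suc b) L)"
  proof (rule sum.cong[OF refl])
    fix b assume b: "b \<in> {..n-1}"
    have "q powi (int n - 2 * int (Suc b) + 1) = q powi (int (n - 1 - b) - int b)"
    proof -
      have "int n - 2 * int (Suc b) + 1 = int (n - 1 - b) - int b" using b n by simp
      thus ?thesis by (simp only:)
    qed
    also have "\<dots> = inverse q ^ b * q ^ (n - 1 - b)"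
      using q by (simp add: power_int_diff field_simps power_inverse)
    finally have p: "q powi (int n - 2 * int (Suc b) + 1) = inverse q ^ b * q ^ (n - 1 - b)" .
    have g: "Gamma n k (Suc b) L = (if b < k then SS n L 0 (k - b) b else 0)"
    proof (cases "b < k")
      case True
      hence "k - Suc b + 1 = k - b" by simp
      thus ?thesis unfolding Gamma_def using schur_hook[of "k - b" n b L] True by simp
    qed (simp add: Gamma_def)
    show "(-1) ^ b * (inverse q ^ b * q ^ (n - 1 - b)) * (if b < k then SS n L 0 (k - b) b else 0) =
       (-1) ^ (Suc b - 1) * q powi (int n - 2 * int (Suc b) + 1) * Gamma n k (Suc b) L"
      unfolding p g by simp
  qed
  also have "\<dots> = (\<Sum>i=1..n. (-1) ^ (i - 1) * q powi (int n - 2 * int i + 1) * Gamma n k i L)"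
  proof -
    have "n = Suc (n - 1)" using n by simp
    hence "{1..n} = {Suc 0..Suc (n - 1)}" by simp
    thus ?thesis by (simp only: sum.shift_bounds_cl_Suc_ivl atLeast0AtMost)
  qed
  finally show ?thesis .
qed

end
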